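(* Let $\theta>0$ and consider the Softplus network $a^{(0)}=x$, $z^{(l)}=b^{(l)}+W^{(l)}a^{(l-1)}$, $a^{(l)}=\sigma_\theta(z^{(l)})$ with $\sigma_\theta(z)=\theta\log(1+e^{z/\theta})$. Assume $\gamma^{(l)}_i>0$ for all $l,i$. Fix $m\ge1$, a neuron $j$ of layer $m$, a label $q$, and $u=s^{(m)}_{j,q}$. Then for every $0\le l\le m$ and neuron $i$ of layer $l$, $\partial a^{(m)}_j/\partial a^{(l)}_i=\xi_{q,+}\bigl(\Gamma^\theta_u(s^{(l)}_{i,+})-\Gamma^\theta_u(s^{(l)}_{i,-})\bigr)$, where $\partial a^{(m)}_j/\partial a^{(l)}_i=[D^{(m)}W^{(m)}\cdots D^{(l+1)}W^{(l+1)}]_{ji}$ with $D^{(l')}=\mathrm{diag}(\sigma'_\theta(z^{(l')}))$.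
   Context: $\sigma'_\theta(z)=1/(1+e^{-z/\theta})$. $W^{(l,\pm)}=(W^{(l)})^\pm$ entrywise ($u^\pm=\max(\pm u,0)$). Labels $r,r',q\in\{+,-\}$; $r\oplus r'=+$ if $r=r'$, else $-$; $\xi_{q,+}=1$ if $q=+$, $-1$ if $q=-$. Soft Stopping-Game chain: states $s^{(l)}_{i,r}$ ($0\le l\le L$) plus a cemetery $\perp$. From $s^{(l)}_{i,r}$ with $l\ge1$: with probability $1-\sigma'_\theta(z^{(l)}_i)$ go to $\perp$; with probability $\sigma'_\theta(z^{(l)}_i)\,W^{(l,r\oplus r')}_{ih}/\gamma^{(l)}_i$ go to $s^{(l-1)}_{h,r'}$, where $\gamma^{(l)}_i=\sum_h|W^{(l)}_{ih}|$, and such a continuation carries discount factor $\gamma^{(l)}_i$. Layer-0 states and $\perp$ are terminal. For a trajectory $\tau$ from $\tau_0=u$, $d_0=1$ and $d_t$ is the product of the discount factors of the continuations taken before time $t$. $\Gamma^\theta_u(v)=\mathbb{E}[\sum_t d_t\mathbf 1\{\tau_t=v\}]$. *)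

theory Defs
  imports Complex_Main
begin

definition softplus :: "real \<Rightarrow> real \<Rightarrow> real" where
  "softplus \<theta> t = \<theta> * ln (1 + exp (t / \<theta>))"

definition dsoftplus :: "real \<Rightarrow> real \<Rightarrow> real" where
  "dsoftplus \<theta> t = 1 / (1 + exp (- t / \<theta>))"

(* Network: widths n l, weights W l i h (= W^(l)_{ih}, i < n l, h < n (l-1)),
   biases b l i, input x.  act l = a^(l). *)
primrec act :: "real \<Rightarrow> (nat \<Rightarrow> nat \<Rightarrow> nat \<Rightarrow> real) \<Rightarrow> (nat \<Rightarrow> nat \<Rightarrow> real)
    \<Rightarrow> (nat \<Rightarrow> real) \<Rightarrow> (nat \<Rightarrow> nat) \<Rightarrow> nat \<Rightarrow> nat \<Rightarrow> real" where
  "act \<theta> W b x n 0 i = x i"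
| "act \<theta> W b x n (Suc l) i =
     softplus \<theta> (b (Suc l) i + (\<Sum>h<n l. W (Suc l) i h * act \<theta> W b x n l h))"

(* pre-activation z^(l)_i for l \<ge> 1 (z^(0) is not used) *)
definition preact :: "real \<Rightarrow> (nat \<Rightarrow> nat \<Rightarrow> nat \<Rightarrow> real) \<Rightarrow> (nat \<Rightarrow> nat \<Rightarrow> real)
    \<Rightarrow> (nat \<Rightarrow> real) \<Rightarrow> (nat \<Rightarrow> nat) \<Rightarrow> nat \<Rightarrow> nat \<Rightarrow> real" where
  "preact \<theta> W b x n l i =
     (if l = 0 then 0 else b l i + (\<Sum>h<n (l - 1). W l i h * act \<theta> W b x n (l - 1) h))"

(* [D^(m) W^(m) ... D^(l+1) W^(l+1)]_{ji}; identity when m = l *)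
primrec jac :: "real \<Rightarrow> (nat \<Rightarrow> nat \<Rightarrow> nat \<Rightarrow> real) \<Rightarrow> (nat \<Rightarrow> nat \<Rightarrow> real)
    \<Rightarrow> (nat \<Rightarrow> real) \<Rightarrow> (nat \<Rightarrow> nat) \<Rightarrow> nat \<Rightarrow> nat \<Rightarrow> nat \<Rightarrow> nat \<Rightarrow> real" where
  "jac \<theta> W b x n l 0 j i = (if j = i then 1 else 0)"
| "jac \<theta> W b x n l (Suc k) j i =
     (if Suc k \<le> l then (if j = i then 1 else 0)
      else dsoftplus \<theta> (preact \<theta> W b x n (Suc k) j) *
           (\<Sum>h<n k. W (Suc k) j h * jac \<theta> W b x n l k h i))"

definition gam :: "(nat \<Rightarrow> nat \<Rightarrow> nat \<Rightarrow> real) \<Rightarrow> (nat \<Rightarrow> nat) \<Rightarrow> nat \<Rightarrow> nat \<Rightarrow> real" where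
  "gam W n l i = (\<Sum>h<n (l - 1). \<bar>W l i h\<bar>)"

(* States of the Soft Stopping-Game chain: S l i r = s^(l)_{i,r} (r = True means +),
   Bot = cemetery *)
datatype st = S nat nat bool | Bot

definition states :: "(nat \<Rightarrow> nat) \<Rightarrow> nat \<Rightarrow> st set" where
  "states n L = {S l i r | l i r. l \<le> L \<and> i < n l} \<union> {Bot}"

definition sgnpart :: "bool \<Rightarrow> real \<Rightarrow> real" where
  "sgnpart r t = (if r then max t 0 else max (- t) 0)"

fun trans :: "real \<Rightarrow> (nat \<Rightarrow> nat \<Rightarrow> nat \<Rightarrow> real) \<Rightarrow> (nat \<Rightarrow> nat \<Rightarrow> real)
    \<Rightarrow> (nat \<Rightarrow> real) \<Rightarrow> (nat \<Rightarrow> nat) \<Rightarrow> st \<Rightarrow> st \<Rightarrow> real" where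
  "trans \<theta> W b x n (S l i r) Bot =
     (if 1 \<le> l then 1 - dsoftplus \<theta> (preact \<theta> W b x n l i) else 0)"
| "trans \<theta> W b x n (S l i r) (S l' h r') =
     (if 1 \<le> l \<and> l' = l - 1
      then dsoftplus \<theta> (preact \<theta> W b x n l i) * sgnpart (r = r') (W l i h) / gam W n l i
      else 0)"
| "trans \<theta> W b x n Bot s = 0"

fun disc :: "(nat \<Rightarrow> nat \<Rightarrow> nat \<Rightarrow> real) \<Rightarrow> (nat \<Rightarrow> nat) \<Rightarrow> st \<Rightarrow> st \<Rightarrow> real" where
  "disc W n (S l i r) (S l' h r') = gam W n l i"
| "disc W n s s' = 1"

(* Gamma^theta_u(v) = E[ sum_t d_t 1{tau_t = v} ]
   = sum_t sum over state paths p = (tau_0,...,tau_t) with tau_0 = u, tau_t = v of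
     P(path) * d_t *)
definition Gam :: "real \<Rightarrow> (nat \<Rightarrow> nat \<Rightarrow> nat \<Rightarrow> real) \<Rightarrow> (nat \<Rightarrow> nat \<Rightarrow> real)
    \<Rightarrow> (nat \<Rightarrow> real) \<Rightarrow> (nat \<Rightarrow> nat) \<Rightarrow> nat \<Rightarrow> st \<Rightarrow> st \<Rightarrow> real" where
  "Gam \<theta> W b x n L u v =
     (\<Sum>t. \<Sum>p\<in>{p. length p = Suc t \<and> set p \<subseteq> states n L \<and> p ! 0 = u \<and> p ! t = v}.
        (\<Prod>k<t. trans \<theta> W b x n (p ! k) (p ! Suc k)) *
        (\<Prod>k<t. disc W n (p ! k) (p ! Suc k)))"

end

theory Submission
  imports Defs
begin

context
  fixes \<theta> :: real and W :: "nat \<Rightarrow> nat \<Rightarrow> nat \<Rightarrow> real" and b :: "nat \<Rightarrow> nat \<Rightarrow> real"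
    and x :: "nat \<Rightarrow> real" and n :: "nat \<Rightarrow> nat" and L :: nat
begin

definition PP :: "nat \<Rightarrow> st \<Rightarrow> st \<Rightarrow> st list set" where
  "PP t u v = {p. length p = Suc t \<and> set p \<subseteq> states n L \<and> p ! 0 = u \<and> p ! t = v}"

definition ew :: "st \<Rightarrow> st \<Rightarrow> real" where
  "ew s s' = trans \<theta> W b x n s s' * disc W n s s'"

definition FF :: "nat \<Rightarrow> st \<Rightarrow> st \<Rightarrow> real" where
  "FF t u v = (\<Sum>p\<in>PP t u v. \<Prod>k<t. ew (p ! k) (p ! Suc k))"

lemma Gam_FF: "Gam \<theta> W b x n L u v = (\<Sum>t. FF t u v)"
  unfolding Gam_def FF_def PP_def ew_def by (simp add: prod.distrib)

lemma finite_states: "finite (states n L)"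
proof -
  have "states n L \<subseteq> {Bot} \<union> (\<Union>l\<le>L. \<Union>i<n l. {S l i True, S l i False})"
    unfolding states_def by auto
  moreover have "finite ({Bot} \<union> (\<Union>l\<le>L. \<Union>i<n l. {S l i True, S l i False}))" by auto
  ultimately show ?thesis by (rule finite_subset)
qed

lemma finite_PP: "finite (PP t u v)"
proof -
  have "PP t u v \<subseteq> {p. set p \<subseteq> states n L \<and> length p = Suc t}" unfolding PP_def by auto
  moreover have "finite {p. set p \<subseteq> states n L \<and> length p = Suc t}"
    using finite_lists_length_eq[OF finite_states] by simp
  ultimately show ?thesis by (rule finite_subset)
qed

lemma FF_0: "FF 0 u v = (if u = v \<and> u \<in> states n L then 1 else 0)"
proof -
  have "PP 0 u v = (if u = v \<and> u \<in> states n L then {[u]} else {})"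
    unfolding PP_def by (auto simp: length_Suc_conv)
  then show ?thesis unfolding FF_def by auto
qed

lemma FF_Suc:
  assumes u: "u \<in> states n L"
  shows "FF (Suc t) u v = (\<Sum>w\<in>states n L. ew u w * FF t w v)"
proof -
  have eq: "PP (Suc t) u v = (\<lambda>(w,p). u # p) ` (SIGMA w:states n L. PP t w v)"
  proof
    show "PP (Suc t) u v \<subseteq> (\<lambda>(w,p). u # p) ` (SIGMA w:states n L. PP t w v)"
    proof
      fix p assume p: "p \<in> PP (Suc t) u v"
      then obtain a q where pq: "p = a # q" unfolding PP_def by (cases p) auto
      have "a = u" using p pq unfolding PP_def by auto
      moreover have "q \<in> PP t (q ! 0) v" using p pq unfolding PP_def by auto
      moreover have "q ! 0 \<in> states n L" using p pq unfolding PP_def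
        by (cases q) auto
      ultimately show "p \<in> (\<lambda>(w,p). u # p) ` (SIGMA w:states n L. PP t w v)"
        using pq by force
    qed
  next
    show "(\<lambda>(w,p). u # p) ` (SIGMA w:states n L. PP t w v) \<subseteq> PP (Suc t) u v"
      using u unfolding PP_def by auto
  qed
  have inj: "inj_on (\<lambda>(w,p). u # p) (SIGMA w:states n L. PP t w v)"
    unfolding inj_on_def PP_def by auto
  have "FF (Suc t) u v = (\<Sum>(w,p)\<in>(SIGMA w:states n L. PP t w v).
           \<Prod>k<Suc t. ew ((u#p) ! k) ((u#p) ! Suc k))"
    unfolding FF_def eq by (subst sum.reindex[OF inj]) (simp add: case_prod_unfold)
  also have "\<dots> = (\<Sum>(w,p)\<in>(SIGMA w:states n L. PP t w v).
           ew u w * (\<Prod>k<t. ew (p ! k) (p ! Suc k)))"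
    by (rule sum.cong) (auto simp del: prod.lessThan_Suc simp: prod.lessThan_Suc_shift PP_def)
  also have "\<dots> = (\<Sum>w\<in>states n L. \<Sum>p\<in>PP t w v. ew u w * (\<Prod>k<t. ew (p ! k) (p ! Suc k)))"
    by (rule sum.Sigma[symmetric]) (auto simp: finite_states finite_PP)
  also have "\<dots> = (\<Sum>w\<in>states n L. ew u w * FF t w v)"
    unfolding FF_def by (simp add: sum_distrib_left)
  finally show ?thesis .
qed

lemma FF_notin: "u \<notin> states n L \<Longrightarrow> FF t u v = 0"
proof -
  assume u: "u \<notin> states n L"
  have "PP t u v = {}"
  proof (rule ccontr)
    assume "PP t u v \<noteq> {}"
    then obtain p where p: "p \<in> PP t u v" by blast
    then have "p ! 0 \<in> set p" unfolding PP_def by auto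
    then show False using p u unfolding PP_def by auto
  qed
  then show ?thesis unfolding FF_def by simp
qed

lemma ew_nz: "ew u w \<noteq> 0 \<Longrightarrow> w = S k h r \<Longrightarrow> \<exists>j q. u = S (Suc k) j q"
  unfolding ew_def by (cases u) (auto split: if_splits)

lemma FF_layer: "FF t u (S l i r) \<noteq> 0 \<Longrightarrow> \<exists>j q. u = S (l + t) j q"
proof (induction t arbitrary: u)
  case 0
  then show ?case by (auto simp: FF_0 split: if_splits)
next
  case (Suc t)
  have u: "u \<in> states n L" using Suc.prems FF_notin by blast
  have "(\<Sum>w\<in>states n L. ew u w * FF t w (S l i r)) \<noteq> 0"
    using Suc.prems FF_Suc[OF u] by simp
  then obtain w where "ew u w \<noteq> 0" "FF t w (S l i r) \<noteq> 0"
    by (metis (no_types, lifting) mult_eq_0_iff sum.neutral)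
  with Suc.IH obtain h r' where "w = S (l + t) h r'" "ew u w \<noteq> 0" by blast
  then show ?case using ew_nz by fastforce
qed


lemma jac_same: "jac \<theta> W b x n l l j i = (if j = i then 1 else 0)"
  by (cases l) auto

lemma ew_step:
  assumes "gam W n (Suc k) j > 0"
  shows "ew (S (Suc k) j q) (S k h r) = dsoftplus \<theta> (preact \<theta> W b x n (Suc k) j) * sgnpart (q = r) (W (Suc k) j h)"
  using assms unfolding ew_def by simp

lemma main_FF:
  assumes gpos: "\<And>l' i'. 1 \<le> l' \<Longrightarrow> l' \<le> L \<Longrightarrow> i' < n l' \<Longrightarrow> gam W n l' i' > 0"
    and i: "i < n l"
  shows "l + d \<le> L \<Longrightarrow> j < n (l + d) \<Longrightarrow> jac \<theta> W b x n l (l + d) j i =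
     (if q then 1 else -1) * (FF d (S (l + d) j q) (S l i True) - FF d (S (l + d) j q) (S l i False))"
proof (induction d arbitrary: j q)
  case 0
  have "S l j q \<in> states n L" "S l i True \<in> states n L" "S l i False \<in> states n L"
    using 0 i unfolding states_def by auto
  then show ?case by (cases q) (auto simp: FF_0 jac_same)
next
  case (Suc d)
  define k where "k = l + d"
  define u where "u = S (Suc k) j q"
  define dsp where "dsp = dsoftplus \<theta> (preact \<theta> W b x n (Suc k) j)"
  have kk: "l + Suc d = Suc k" unfolding k_def by simp
  have u: "u \<in> states n L" using Suc.prems unfolding u_def states_def kk by auto
  have g: "gam W n (Suc k) j > 0" using gpos Suc.prems kk by auto
  define T where "T = (\<lambda>(h,r). S k h r) ` ({..<n k} \<times> (UNIV::bool set))"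
  have Tsub: "T \<subseteq> states n L" using Suc.prems unfolding T_def states_def k_def by auto
  have injT: "inj_on (\<lambda>(h,r). S k h r) ({..<n k} \<times> (UNIV::bool set))"
    unfolding inj_on_def by auto
  have FFs: "FF (Suc d) u (S l i r) = (\<Sum>h<n k. dsp * (sgnpart q (W (Suc k) j h) * FF d (S k h True) (S l i r)
      + sgnpart (\<not> q) (W (Suc k) j h) * FF d (S k h False) (S l i r)))" for r
  proof -
    have "FF (Suc d) u (S l i r) = (\<Sum>w\<in>states n L. ew u w * FF d w (S l i r))"
      using FF_Suc[OF u] .
    also have "\<dots> = (\<Sum>w\<in>T. ew u w * FF d w (S l i r))"
    proof (rule sum.mono_neutral_right[OF finite_states Tsub])
      show "\<forall>w\<in>states n L - T. ew u w * FF d w (S l i r) = 0"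
      proof
        fix w assume w: "w \<in> states n L - T"
        show "ew u w * FF d w (S l i r) = 0"
        proof (rule ccontr)
          assume "ew u w * FF d w (S l i r) \<noteq> 0"
          then have "FF d w (S l i r) \<noteq> 0" by simp
          then obtain h r' where "w = S k h r'" using FF_layer k_def by blast
          then show False using w unfolding T_def states_def by auto
        qed
      qed
    qed
    also have "\<dots> = (\<Sum>(h,r')\<in>{..<n k} \<times> (UNIV::bool set). ew u (S k h r') * FF d (S k h r') (S l i r))"
      unfolding T_def by (subst sum.reindex[OF injT]) (simp add: case_prod_unfold)
    also have "\<dots> = (\<Sum>h<n k. \<Sum>r'\<in>(UNIV::bool set). ew u (S k h r') * FF d (S k h r') (S l i r))"
      by (rule sum.cartesian_product[symmetric])
    also have "\<dots> = (\<Sum>h<n k. dsp * (sgnpart q (W (Suc k) j h) * FF d (S k h True) (S l i r)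
      + sgnpart (\<not> q) (W (Suc k) j h) * FF d (S k h False) (S l i r)))"
      unfolding u_def dsp_def using g by (simp add: UNIV_bool ew_step algebra_simps)
    finally show ?thesis .
  qed
  have IH: "FF d (S k h r) (S l i True) - FF d (S k h r) (S l i False) = (if r then 1 else -1) * jac \<theta> W b x n l k h i"
    if "h < n k" for h r
    using Suc.IH[of h r] Suc.prems that unfolding k_def by (cases r) auto
  have "(if q then 1 else -1) * (FF (Suc d) u (S l i True) - FF (Suc d) u (S l i False))
     = (\<Sum>h<n k. (if q then 1 else -1) * dsp * (sgnpart q (W (Suc k) j h) * (FF d (S k h True) (S l i True) - FF d (S k h True) (S l i False))
      + sgnpart (\<not> q) (W (Suc k) j h) * (FF d (S k h False) (S l i True) - FF d (S k h False) (S l i False))))"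
    unfolding FFs by (simp add: sum_subtractf[symmetric] sum_distrib_left algebra_simps)
  also have "\<dots> = (\<Sum>h<n k. dsp * (W (Suc k) j h * jac \<theta> W b x n l k h i))"
  proof (rule sum.cong[OF refl])
    fix h assume "h \<in> {..<n k}"
    then have h: "h < n k" by simp
    show "(if q then 1 else -1) * dsp * (sgnpart q (W (Suc k) j h) * (FF d (S k h True) (S l i True) - FF d (S k h True) (S l i False))
      + sgnpart (\<not> q) (W (Suc k) j h) * (FF d (S k h False) (S l i True) - FF d (S k h False) (S l i False)))
      = dsp * (W (Suc k) j h * jac \<theta> W b x n l k h i)"
      unfolding IH[OF h] by (cases q) (auto simp: sgnpart_def max_def algebra_simps)
  qed
  also have "\<dots> = jac \<theta> W b x n l (Suc k) j i"
    unfolding dsp_def k_def by (simp add: sum_distrib_left)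
  finally show ?case unfolding u_def kk by simp
qed


end


lemma Gam_single:
  assumes "l \<le> m"
  shows "Gam \<theta> W b x n L (S m j q) (S l i r) = FF \<theta> W b x n L (m - l) (S m j q) (S l i r)"
proof -
  have "(\<lambda>t. FF \<theta> W b x n L t (S m j q) (S l i r)) =
        (\<lambda>t. if t = m - l then FF \<theta> W b x n L (m - l) (S m j q) (S l i r) else 0)"
  proof
    fix t show "FF \<theta> W b x n L t (S m j q) (S l i r) =
        (if t = m - l then FF \<theta> W b x n L (m - l) (S m j q) (S l i r) else 0)"
    proof (cases "t = m - l")
      case False
      have "FF \<theta> W b x n L t (S m j q) (S l i r) = 0"
      proof (rule ccontr)
        assume "FF \<theta> W b x n L t (S m j q) (S l i r) \<noteq> 0"
        from FF_layer[OF this] have "m = l + t" by auto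
        then show False using False by simp
      qed
      then show ?thesis using False by simp
    qed simp
  qed
  then have "(\<lambda>t. FF \<theta> W b x n L t (S m j q) (S l i r)) sums FF \<theta> W b x n L (m - l) (S m j q) (S l i r)"
    by (simp only: sums_single[of "m - l" "\<lambda>_. FF \<theta> W b x n L (m - l) (S m j q) (S l i r)"])
  then show ?thesis unfolding Gam_FF by (rule sums_unique[symmetric])
qed

theorem mainTheorem7:
  fixes \<theta> :: real and W :: "nat \<Rightarrow> nat \<Rightarrow> nat \<Rightarrow> real" and b :: "nat \<Rightarrow> nat \<Rightarrow> real"
    and x :: "nat \<Rightarrow> real" and n :: "nat \<Rightarrow> nat" and L m j l i :: nat and q :: bool
  assumes "\<theta> > 0"
    and "\<And>l' i'. 1 \<le> l' \<Longrightarrow> l' \<le> L \<Longrightarrow> i' < n l' \<Longrightarrow> gam W n l' i' > 0"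
    and "1 \<le> m" and "m \<le> L" and "j < n m"
    and "l \<le> m" and "i < n l"
  shows "jac \<theta> W b x n l m j i =
           (if q then 1 else -1) *
           (Gam \<theta> W b x n L (S m j q) (S l i True) - Gam \<theta> W b x n L (S m j q) (S l i False))"
proof -
  have mm: "l + (m - l) = m" using assms by simp
  have "jac \<theta> W b x n l (l + (m - l)) j i =
     (if q then 1 else -1) * (FF \<theta> W b x n L (m - l) (S (l + (m - l)) j q) (S l i True) - FF \<theta> W b x n L (m - l) (S (l + (m - l)) j q) (S l i False))"
    by (rule main_FF[OF assms(2) assms(7)]) (use assms mm in auto)
  then show ?thesis
    unfolding Gam_single[OF assms(6)] mm .
qed

end
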